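(* If $G$ is a $3$-edge-connected graph admitting a nowhere-zero $4$-flow, then $fn(G)\le 2$. In particular, $fn(G)=2$ for every $3$-edge-connected $3$-edge-colourable graph $G$.
   Context: All graphs are finite. An orientation is strong if for every ordered pair of distinct vertices $u,v$ there is a directed $uv$-path. An edge $e$ is deletable in an orientation $(G,o)$ if the restriction of $o$ to $E(G)\setminus\{e\}$ is a strong orientation of $G-e$. For a $3$-edge-connected graph $G$, the Frank number $fn(G)$ is the minimum number $k$ such that $G$ admits $k$ orientations with the property that every edge of $G$ is deletable in at least one of them. A nowhere-zero $k$-flow on $G$ is a pair $(o,f)$ of an orientation $o$ and a map $f:E(G)\to\{\pm1,\dots,\pm(k-1)\}$ such that at every vertex the sum of $f$ over incoming edges equals the sum of $f$ over outgoing edges. *)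

theory Defs
  imports Main
begin

text \<open>A finite loopless multigraph is given by a vertex set V, an edge set E and a map
  ends assigning to each edge its two (distinct) end vertices, listed in an arbitrary
  reference order.  An orientation is a map ori :: 'e => bool: ori e = True means e is directed
  from fst (ends e) to snd (ends e), otherwise in the reverse direction.\<close>

definition multigraph :: "'v set \<Rightarrow> 'e set \<Rightarrow> ('e \<Rightarrow> 'v \<times> 'v) \<Rightarrow> bool" where
  "multigraph V E ends \<longleftrightarrow> finite V \<and> finite E \<and>
     (\<forall>e\<in>E. fst (ends e) \<in> V \<and> snd (ends e) \<in> V \<and> fst (ends e) \<noteq> snd (ends e))"

definition tail :: "('e \<Rightarrow> 'v \<times> 'v) \<Rightarrow> ('e \<Rightarrow> bool) \<Rightarrow> 'e \<Rightarrow> 'v" where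
  "tail ends ori e = (if ori e then fst (ends e) else snd (ends e))"

definition head :: "('e \<Rightarrow> 'v \<times> 'v) \<Rightarrow> ('e \<Rightarrow> bool) \<Rightarrow> 'e \<Rightarrow> 'v" where
  "head ends ori e = (if ori e then snd (ends e) else fst (ends e))"

definition arcs :: "('e \<Rightarrow> 'v \<times> 'v) \<Rightarrow> ('e \<Rightarrow> bool) \<Rightarrow> 'e set \<Rightarrow> ('v \<times> 'v) set" where
  "arcs ends ori F = {(tail ends ori e, head ends ori e) | e. e \<in> F}"

definition uedges :: "('e \<Rightarrow> 'v \<times> 'v) \<Rightarrow> 'e set \<Rightarrow> ('v \<times> 'v) set" where
  "uedges ends F = {ends e | e. e \<in> F} \<union> {prod.swap (ends e) | e. e \<in> F}"

definition connected_graph :: "'v set \<Rightarrow> ('e \<Rightarrow> 'v \<times> 'v) \<Rightarrow> 'e set \<Rightarrow> bool" where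
  "connected_graph V ends F \<longleftrightarrow> (\<forall>u\<in>V. \<forall>v\<in>V. (u, v) \<in> (uedges ends F)\<^sup>*)"

definition k_edge_connected :: "nat \<Rightarrow> 'v set \<Rightarrow> 'e set \<Rightarrow> ('e \<Rightarrow> 'v \<times> 'v) \<Rightarrow> bool" where
  "k_edge_connected k V E ends \<longleftrightarrow> multigraph V E ends \<and> 2 \<le> card V \<and>
     (\<forall>F \<subseteq> E. card F < k \<longrightarrow> connected_graph V ends (E - F))"

definition strong :: "'v set \<Rightarrow> ('e \<Rightarrow> 'v \<times> 'v) \<Rightarrow> 'e set \<Rightarrow> ('e \<Rightarrow> bool) \<Rightarrow> bool" where
  "strong V ends F ori \<longleftrightarrow> (\<forall>u\<in>V. \<forall>v\<in>V. u \<noteq> v \<longrightarrow> (u, v) \<in> (arcs ends ori F)\<^sup>+)"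

definition deletable :: "'v set \<Rightarrow> 'e set \<Rightarrow> ('e \<Rightarrow> 'v \<times> 'v) \<Rightarrow> ('e \<Rightarrow> bool) \<Rightarrow> 'e \<Rightarrow> bool" where
  "deletable V E ends ori e \<longleftrightarrow> e \<in> E \<and> strong V ends (E - {e}) ori"

definition frank_number :: "'v set \<Rightarrow> 'e set \<Rightarrow> ('e \<Rightarrow> 'v \<times> 'v) \<Rightarrow> nat" where
  "frank_number V E ends = (LEAST k. \<exists>os :: nat \<Rightarrow> ('e \<Rightarrow> bool).
      \<forall>e\<in>E. \<exists>i<k. deletable V E ends (os i) e)"

definition nowhere_zero_flow :: "nat \<Rightarrow> 'v set \<Rightarrow> 'e set \<Rightarrow> ('e \<Rightarrow> 'v \<times> 'v) \<Rightarrow> bool" where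
  "nowhere_zero_flow k V E ends \<longleftrightarrow> (\<exists>(ori :: 'e \<Rightarrow> bool) (f :: 'e \<Rightarrow> int).
      (\<forall>e\<in>E. f e \<noteq> 0 \<and> \<bar>f e\<bar> \<le> int k - 1) \<and>
      (\<forall>v\<in>V. (\<Sum>e\<in>{e\<in>E. head ends ori e = v}. f e) = (\<Sum>e\<in>{e\<in>E. tail ends ori e = v}. f e)))"

definition three_edge_colourable :: "'v set \<Rightarrow> 'e set \<Rightarrow> ('e \<Rightarrow> 'v \<times> 'v) \<Rightarrow> bool" where
  "three_edge_colourable V E ends \<longleftrightarrow> (\<exists>c :: 'e \<Rightarrow> nat. (\<forall>e\<in>E. c e < 3) \<and>
     (\<forall>e1\<in>E. \<forall>e2\<in>E. e1 \<noteq> e2 \<and>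
        {fst (ends e1), snd (ends e1)} \<inter> {fst (ends e2), snd (ends e2)} \<noteq> {} \<longrightarrow> c e1 \<noteq> c e2))"

end

theory Submission
  imports Defs
begin


definition dd :: "'v \<times> 'v \<Rightarrow> 'v \<Rightarrow> int" where
  "dd p v = of_bool (snd p = v) - of_bool (fst p = v)"

lemma sum_two:
  assumes "finite C" "e1 \<in> C" "e2 \<in> C" "e1 \<noteq> e2"
  shows "sum g C = g e1 + g e2 + sum g (C - {e1, e2})"
proof -
  have "sum g C = g e1 + sum g (C - {e1})" using assms by (simp add: sum.remove)
  also have "sum g (C - {e1}) = g e2 + sum g (C - {e1} - {e2})"
    using assms by (simp add: sum.remove)
  finally show ?thesis by (simp add: insert_commute Diff_insert2[symmetric] add.assoc)
qed

lemma eul: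
  "finite C \<Longrightarrow> (\<forall>v. even (\<Sum>e\<in>C. dd (ends e) v)) \<Longrightarrow>
   \<exists>\<phi>. (\<forall>e\<in>C. \<phi> e = 1 \<or> \<phi> e = -1) \<and> (\<forall>v. (\<Sum>e\<in>C. \<phi> e * dd (ends e) v) = 0)"
proof (induction "card C" arbitrary: C ends rule: less_induct)
  case less
  show ?case
  proof (cases "C = {}")
    case True then show ?thesis by auto
  next
    case False
    then obtain e1 where e1: "e1 \<in> C" by auto
    obtain a b where ab: "ends e1 = (a, b)" by fastforce
    show ?thesis
    proof (cases "a = b")
      case True
      have d0: "dd (ends e1) v = 0" for v using True ab by (simp add: dd_def)
      have cl: "card (C - {e1}) < card C" using e1 less.prems(1) by (meson card_Diff1_less)
      have ev1: "\<forall>v. even (\<Sum>e\<in>C-{e1}. dd (ends e) v)"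
      proof
        fix v
        have "(\<Sum>e\<in>C. dd (ends e) v) = dd (ends e1) v + (\<Sum>e\<in>C-{e1}. dd (ends e) v)"
          using e1 less.prems(1) by (simp add: sum.remove)
        then have "(\<Sum>e\<in>C. dd (ends e) v) = (\<Sum>e\<in>C-{e1}. dd (ends e) v)" using d0 by simp
        moreover have "even (\<Sum>e\<in>C. dd (ends e) v)" using less.prems(2) by blast
        ultimately show "even (\<Sum>e\<in>C-{e1}. dd (ends e) v)" by simp
      qed
      obtain \<phi> where ph: "\<forall>e\<in>C-{e1}. \<phi> e = 1 \<or> \<phi> e = -1"
          "\<forall>v. (\<Sum>e\<in>C-{e1}. \<phi> e * dd (ends e) v) = 0"
        using less.hyps[OF cl finite_Diff[OF less.prems(1)] ev1] by (elim exE conjE)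
      show ?thesis
      proof (intro exI[of _ "\<phi>(e1 := 1)"] conjI ballI allI)
        fix e assume "e \<in> C" then show "(\<phi>(e1 := 1)) e = 1 \<or> (\<phi>(e1 := 1)) e = -1" using ph by auto
      next
        fix v
        have "(\<Sum>e\<in>C. (\<phi>(e1 := 1)) e * dd (ends e) v) = (\<phi>(e1 := 1)) e1 * dd (ends e1) v
              + (\<Sum>e\<in>C-{e1}. (\<phi>(e1 := 1)) e * dd (ends e) v)"
          using e1 less.prems(1) by (simp add: sum.remove)
        also have "(\<Sum>e\<in>C-{e1}. (\<phi>(e1 := 1)) e * dd (ends e) v) = (\<Sum>e\<in>C-{e1}. \<phi> e * dd (ends e) v)"
          by (rule sum.cong) auto
        finally show "(\<Sum>e\<in>C. (\<phi>(e1 := 1)) e * dd (ends e) v) = 0" using d0 ph by simp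
      qed
    next
      case False
      have "(\<Sum>e\<in>C. dd (ends e) b) = dd (ends e1) b + (\<Sum>e\<in>C-{e1}. dd (ends e) b)"
        using e1 less.prems(1) by (simp add: sum.remove)
      moreover have "dd (ends e1) b = 1" using ab False by (simp add: dd_def)
      moreover have "even (\<Sum>e\<in>C. dd (ends e) b)" using less.prems(2) by blast
      ultimately have "odd (\<Sum>e\<in>C-{e1}. dd (ends e) b)" by simp
      then have "(\<Sum>e\<in>C-{e1}. dd (ends e) b) \<noteq> 0" by auto
      then obtain e2 where e2: "e2 \<in> C - {e1}" "dd (ends e2) b \<noteq> 0"
        by (meson sum.neutral)
      obtain x y where xy: "ends e2 = (x, y)" by fastforce
      obtain s c where sc: "s = 1 \<or> s = -1" "\<And>v. dd (ends e2) v = s * dd (c, b) v"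
      proof (cases "y = b")
        case True
        then show ?thesis using that[of 1 x] xy by (simp add: dd_def)
      next
        case False
        then have "x = b" using e2(2) xy by (auto simp: dd_def)
        then show ?thesis using that[of "-1" y] xy by (simp add: dd_def)
      qed
      define ends' where "ends' = ends(e1 := (a, c))"
      have e12: "e1 \<noteq> e2" "e2 \<in> C" using e2 by auto
      have cl: "card (C - {e2}) < card C" using e12 less.prems(1) by (meson card_Diff1_less)
      have dac: "dd (a, c) v = dd (ends e1) v - s * dd (ends e2) v" for v
        using sc ab by (auto simp: dd_def)
      have rest: "(\<Sum>e\<in>C-{e1,e2}. g (ends' e) v) = (\<Sum>e\<in>C-{e1,e2}. g (ends e) v)" for g :: "_ \<Rightarrow> _ \<Rightarrow> int" and v
        by (rule sum.cong) (auto simp: ends'_def)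
      have s2: "(\<Sum>e\<in>C-{e2}. g e) = g e1 + (\<Sum>e\<in>C-{e1,e2}. g e)" for g :: "_ \<Rightarrow> int"
      proof -
        have "(\<Sum>e\<in>C-{e2}. g e) = g e1 + (\<Sum>e\<in>C-{e2}-{e1}. g e)"
          using e12 e1 less.prems(1) by (simp add: sum.remove)
        moreover have "C-{e2}-{e1} = C-{e1,e2}" by auto
        ultimately show ?thesis by simp
      qed
      have ev1: "\<forall>v. even (\<Sum>e\<in>C-{e2}. dd (ends' e) v)"
      proof
        fix v
        have "(\<Sum>e\<in>C-{e2}. dd (ends' e) v) = dd (a,c) v + (\<Sum>e\<in>C-{e1,e2}. dd (ends e) v)"
          using s2[of "\<lambda>e. dd (ends' e) v"] rest[of dd v] by (simp add: ends'_def)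
        also have "\<dots> = (\<Sum>e\<in>C. dd (ends e) v) - (1 + s) * dd (ends e2) v"
          using sum_two[OF less.prems(1) e1 e12(2) e12(1), of "\<lambda>e. dd (ends e) v"] dac
          by (simp add: algebra_simps)
        finally show "even (\<Sum>e\<in>C-{e2}. dd (ends' e) v)"
          using less.prems(2) sc(1) by auto
      qed
      obtain \<phi> where ph: "\<forall>e\<in>C-{e2}. \<phi> e = 1 \<or> \<phi> e = -1"
          "\<forall>v. (\<Sum>e\<in>C-{e2}. \<phi> e * dd (ends' e) v) = 0"
        using less.hyps[OF cl finite_Diff[OF less.prems(1)] ev1] by (elim exE conjE)
      define \<psi> where "\<psi> = \<phi>(e2 := - s * \<phi> e1)"
      show ?thesis
      proof (intro exI[of _ \<psi>] conjI ballI allI)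
        fix e assume "e \<in> C" then show "\<psi> e = 1 \<or> \<psi> e = -1" using ph(1) sc(1) e1 e12
          by (auto simp: \<psi>_def)
      next
        fix v
        have r2: "(\<Sum>e\<in>C-{e1,e2}. \<psi> e * dd (ends e) v) = (\<Sum>e\<in>C-{e1,e2}. \<phi> e * dd (ends' e) v)"
          by (rule sum.cong) (auto simp: \<psi>_def ends'_def)
        have "(\<Sum>e\<in>C. \<psi> e * dd (ends e) v) = \<psi> e1 * dd (ends e1) v + \<psi> e2 * dd (ends e2) v
            + (\<Sum>e\<in>C-{e1,e2}. \<psi> e * dd (ends e) v)"
          by (rule sum_two[OF less.prems(1) e1 e12(2) e12(1)])
        also have "\<dots> = \<phi> e1 * dd (a, c) v + (\<Sum>e\<in>C-{e1,e2}. \<phi> e * dd (ends' e) v)"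
          using e12 r2 dac[of v] by (simp add: \<psi>_def right_diff_distrib)
        also have "\<dots> = (\<Sum>e\<in>C-{e2}. \<phi> e * dd (ends' e) v)"
          using s2[of "\<lambda>e. \<phi> e * dd (ends' e) v"] by (simp add: ends'_def)
        finally show "(\<Sum>e\<in>C. \<psi> e * dd (ends e) v) = 0" using ph(2) by simp
      qed
    qed
  qed
qed



lemma sum_ofbool_eq: "finite X \<Longrightarrow> (\<Sum>x\<in>X. (of_bool (a = x) :: int)) = of_bool (a \<in> X)"
  by (induction X rule: finite_induct) auto

lemma sum_dd: "finite X \<Longrightarrow> (\<Sum>x\<in>X. dd p x) = of_bool (snd p \<in> X) - of_bool (fst p \<in> X)"
  by (simp add: dd_def sum_subtractf sum_ofbool_eq)

lemma del_lemma:
  assumes kc: "k_edge_connected 3 V E ends"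
    and circ: "\<forall>v. (\<Sum>e\<in>E. F e * dd (ends e) v) = 0"
    and nz: "\<forall>e\<in>E. F e \<noteq> 0"
    and eE: "e \<in> E" and e1: "F e = 1 \<or> F e = -1"
  shows "deletable V E ends (\<lambda>x. F x > 0) e"
proof -
  define ori where "ori = (\<lambda>x. F x > (0::int))"
  have mg: "multigraph V E ends" and fin3: "\<forall>K \<subseteq> E. card K < 3 \<longrightarrow> connected_graph V ends (E - K)"
    using kc by (auto simp: k_edge_connected_def)
  have finE: "finite E" and finV: "finite V" and inV: "\<And>e. e \<in> E \<Longrightarrow> fst (ends e) \<in> V \<and> snd (ends e) \<in> V"
    using mg by (auto simp: multigraph_def)
  define A where "A = arcs ends ori (E - {e})"
  have "strong V ends (E - {e}) ori"
    unfolding strong_def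
  proof (intro ballI impI)
    fix u w assume uV: "u \<in> V" and wV: "w \<in> V" and uw: "u \<noteq> w"
    show "(u, w) \<in> (arcs ends ori (E - {e}))\<^sup>+"
    proof (rule ccontr)
      assume nuw: "(u, w) \<notin> (arcs ends ori (E - {e}))\<^sup>+"
      define X where "X = {x. (u, x) \<in> A\<^sup>*}"
      have uX: "u \<in> X" by (simp add: X_def)
      have wX: "w \<notin> X" using nuw uw by (auto simp: X_def A_def rtrancl_eq_or_trancl)
      have clos: "\<And>x y. x \<in> X \<Longrightarrow> (x, y) \<in> A \<Longrightarrow> y \<in> X"
        by (auto simp: X_def intro: rtrancl_into_rtrancl)
      have XV: "X \<subseteq> V"
      proof
        fix x assume "x \<in> X"
        then have "(u, x) \<in> A\<^sup>*" by (simp add: X_def)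
        then show "x \<in> V"
        proof (induction rule: rtrancl_induct)
          case base then show ?case using uV .
        next
          case (step y z)
          then obtain e' where "e' \<in> E" "z = head ends ori e'"
            by (auto simp: A_def arcs_def)
          then show ?case using inV by (auto simp: head_def)
        qed
      qed
      have finX: "finite X" using XV finV finite_subset by blast
      define K where "K = {e' \<in> E. (fst (ends e') \<in> X) \<noteq> (snd (ends e') \<in> X)}"
      have KE: "K \<subseteq> E" by (auto simp: K_def)
      have finK: "finite K" using KE finE finite_subset by blast
      have cK: "card K \<ge> 3"
      proof (rule ccontr)
        assume "\<not> card K \<ge> 3"
        then have "connected_graph V ends (E - K)" using fin3 KE by auto
        then have "(u, w) \<in> (uedges ends (E - K))\<^sup>*" using uV wV by (auto simp: connected_graph_def)
        then have "u \<in> X \<longleftrightarrow> w \<in> X"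
        proof (induction rule: rtrancl_induct)
          case base then show ?case by simp
        next
          case (step y z)
          then obtain e' where "e' \<in> E - K" "(y, z) = ends e' \<or> (y, z) = prod.swap (ends e')"
            by (auto simp: uedges_def)
          then have "y \<in> X \<longleftrightarrow> z \<in> X" by (cases "ends e'") (auto simp: K_def)
          then show ?case using step.IH by simp
        qed
        then show False using uX wX by simp
      qed
      define D where "D = (\<lambda>e'. of_bool (snd (ends e') \<in> X) - of_bool (fst (ends e') \<in> X) :: int)"
      have "0 = (\<Sum>x\<in>X. \<Sum>e'\<in>E. F e' * dd (ends e') x)" using circ by simp
      also have "\<dots> = (\<Sum>e'\<in>E. \<Sum>x\<in>X. F e' * dd (ends e') x)" by (rule sum.swap)
      also have "\<dots> = (\<Sum>e'\<in>E. F e' * D e')"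
        by (rule sum.cong) (simp_all add: sum_distrib_left[symmetric] sum_dd[OF finX] D_def)
      also have "\<dots> = (\<Sum>e'\<in>K. F e' * D e')"
        by (rule sum.mono_neutral_right[OF finE KE]) (auto simp: K_def D_def)
      finally have s0: "(\<Sum>e'\<in>K. F e' * D e') = 0" by simp
      have pos: "F e' * D e' \<ge> 1" if "e' \<in> K - {e}" for e'
      proof -
        have e'E: "e' \<in> E - {e}" using that KE by auto
        then have arc: "(tail ends ori e', head ends ori e') \<in> A" by (auto simp: A_def arcs_def)
        have ne: "F e' \<noteq> 0" using nz e'E by auto
        have cut: "(fst (ends e') \<in> X) \<noteq> (snd (ends e') \<in> X)" using that by (auto simp: K_def)
        show ?thesis
        proof (cases "F e' > 0")
          case True
          then have "fst (ends e') \<notin> X"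
            using clos[of "fst (ends e')" "snd (ends e')"] arc cut
            by (auto simp: ori_def tail_def head_def)
          then show ?thesis using cut True by (auto simp: D_def)
        next
          case False
          then have "snd (ends e') \<notin> X"
            using clos[of "snd (ends e')" "fst (ends e')"] arc cut
            by (auto simp: ori_def tail_def head_def)
          then show ?thesis using cut False ne by (auto simp: D_def)
        qed
      qed
      have "of_nat (card (K - {e})) * 1 \<le> (\<Sum>e'\<in>K-{e}. F e' * D e')"
        by (rule sum_bounded_below) (use pos in auto)
      moreover have "card (K - {e}) \<ge> 2" using cK card_Diff_singleton_if[of K e] by auto
      moreover have "F e * D e \<ge> -1" using e1 by (auto simp: D_def)
      moreover have "(\<Sum>e'\<in>K. F e' * D e') = (\<Sum>e'\<in>K-{e}. F e' * D e') + (if e \<in> K then F e * D e else 0)"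
        using finK by (cases "e \<in> K") (auto simp: sum.remove)
      ultimately have "(\<Sum>e'\<in>K. F e' * D e') \<ge> 1"
      proof -
        assume a1: "of_nat (card (K - {e})) * 1 \<le> (\<Sum>e'\<in>K-{e}. F e' * D e')"
          and a2: "card (K - {e}) \<ge> 2" and a3: "F e * D e \<ge> -1"
          and a4: "(\<Sum>e'\<in>K. F e' * D e') = (\<Sum>e'\<in>K-{e}. F e' * D e') + (if e \<in> K then F e * D e else 0)"
        have "(2::int) \<le> of_nat (card (K - {e}))" using a2 by linarith
        then have "2 \<le> (\<Sum>e'\<in>K-{e}. F e' * D e')" using a1 by linarith
        moreover have "(if e \<in> K then F e * D e else 0) \<ge> -1" using a3 by simp
        ultimately show ?thesis using a4 by linarith
      qed
      then show False using s0 by simp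
    qed
  qed
  then show ?thesis using eE by (simp add: deletable_def ori_def)
qed



definition circ :: "'e set \<Rightarrow> ('e \<Rightarrow> 'v \<times> 'v) \<Rightarrow> ('e \<Rightarrow> int) \<Rightarrow> bool" where
  "circ E ends h \<longleftrightarrow> (\<forall>v. (\<Sum>e\<in>E. h e * dd (ends e) v) = 0)"

lemma circ_lin:
  assumes "circ E ends h1" "circ E ends h2"
  shows "circ E ends (\<lambda>e. a * h1 e + b * h2 e)"
proof -
  have "(\<Sum>e\<in>E. (a * h1 e + b * h2 e) * dd (ends e) v)
      = a * (\<Sum>e\<in>E. h1 e * dd (ends e) v) + b * (\<Sum>e\<in>E. h2 e * dd (ends e) v)" for v
    by (simp add: sum.distrib sum_distrib_left algebra_simps)
  then show ?thesis using assms by (simp add: circ_def)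
qed

lemma eul_ext:
  assumes "finite E" "C \<subseteq> E" "\<forall>v. even (\<Sum>e\<in>C. dd (ends e) v)"
  shows "\<exists>\<phi>. (\<forall>e. (e \<in> C \<longrightarrow> \<phi> e = 1 \<or> \<phi> e = -1) \<and> (e \<notin> C \<longrightarrow> \<phi> e = 0)) \<and> circ E ends \<phi>"
proof -
  have fC: "finite C" using assms finite_subset by blast
  obtain \<phi> where ph: "\<forall>e\<in>C. \<phi> e = 1 \<or> \<phi> e = -1" "\<forall>v. (\<Sum>e\<in>C. \<phi> e * dd (ends e) v) = 0"
    using eul[OF fC assms(3)] by (elim exE conjE)
  define \<phi>' where "\<phi>' = (\<lambda>e. if e \<in> C then \<phi> e else 0)"
  have "(\<Sum>e\<in>E. \<phi>' e * dd (ends e) v) = (\<Sum>e\<in>C. \<phi>' e * dd (ends e) v)" for v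
    by (rule sum.mono_neutral_right[OF assms(1,2)]) (auto simp: \<phi>'_def)
  also have "(\<Sum>e\<in>C. \<phi>' e * dd (ends e) v) = (\<Sum>e\<in>C. \<phi> e * dd (ends e) v)" for v
    by (rule sum.cong) (auto simp: \<phi>'_def)
  finally have "circ E ends \<phi>'" using ph(2) by (simp add: circ_def)
  then show ?thesis using ph(1) by (intro exI[of _ \<phi>']) (auto simp: \<phi>'_def)
qed

lemma parity:
  assumes fin: "finite E" and c: "circ E ends h"
  shows "\<forall>v. even (\<Sum>e\<in>{e\<in>E. odd (h e)}. dd (ends e) v)"
proof
  fix v
  define C where "C = {e\<in>E. odd (h e)}"
  have CE: "C \<subseteq> E" by (auto simp: C_def)
  have "0 = (\<Sum>e\<in>E. h e * dd (ends e) v)" using c by (simp add: circ_def)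
  also have "\<dots> = (\<Sum>e\<in>E-C. h e * dd (ends e) v) + (\<Sum>e\<in>C. h e * dd (ends e) v)"
    by (rule sum.subset_diff[OF CE fin])
  also have "(\<Sum>e\<in>C. h e * dd (ends e) v) = (\<Sum>e\<in>C. (h e - 1) * dd (ends e) v) + (\<Sum>e\<in>C. dd (ends e) v)"
    by (simp add: sum.distrib[symmetric] algebra_simps)
  finally have eq: "(\<Sum>e\<in>C. dd (ends e) v) = - (\<Sum>e\<in>E-C. h e * dd (ends e) v) - (\<Sum>e\<in>C. (h e - 1) * dd (ends e) v)"
    by simp
  have "even (\<Sum>e\<in>E-C. h e * dd (ends e) v)" by (rule dvd_sum) (auto simp: C_def)
  moreover have "even (\<Sum>e\<in>C. (h e - 1) * dd (ends e) v)" by (rule dvd_sum) (auto simp: C_def)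
  ultimately have "even (\<Sum>e\<in>C. dd (ends e) v)" using eq by simp
  then show "even (\<Sum>e\<in>{e\<in>E. odd (h e)}. dd (ends e) v)" by (simp add: C_def)
qed

lemma cover_lemma':
  assumes kc: "k_edge_connected 3 V E ends"
    and C1: "C1 \<subseteq> E" "\<forall>v. even (\<Sum>e\<in>C1. dd (ends e) v)"
    and C2: "C2 \<subseteq> E" "\<forall>v. even (\<Sum>e\<in>C2. dd (ends e) v)"
    and cov: "C1 \<union> C2 = E"
  shows "\<exists>os. \<forall>e\<in>E. \<exists>i<(2::nat). deletable V E ends (os i) e"
proof -
  have finE: "finite E" using kc by (auto simp: k_edge_connected_def multigraph_def)
  obtain \<phi>1 where p1: "\<forall>e. (e \<in> C1 \<longrightarrow> \<phi>1 e = 1 \<or> \<phi>1 e = -1) \<and> (e \<notin> C1 \<longrightarrow> \<phi>1 e = 0)" "circ E ends \<phi>1"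
    using eul_ext[OF finE C1] by (elim exE conjE)
  obtain \<phi>2 where p2: "\<forall>e. (e \<in> C2 \<longrightarrow> \<phi>2 e = 1 \<or> \<phi>2 e = -1) \<and> (e \<notin> C2 \<longrightarrow> \<phi>2 e = 0)" "circ E ends \<phi>2"
    using eul_ext[OF finE C2] by (elim exE conjE)
  define F1 where "F1 = (\<lambda>e. 1 * \<phi>1 e + 2 * \<phi>2 e)"
  define F2 where "F2 = (\<lambda>e. 2 * \<phi>1 e + (-1) * \<phi>2 e)"
  have c1: "circ E ends F1" unfolding F1_def by (rule circ_lin[OF p1(2) p2(2)])
  have c2: "circ E ends F2" unfolding F2_def by (rule circ_lin[OF p1(2) p2(2)])
  have props: "F1 e \<noteq> 0 \<and> F2 e \<noteq> 0 \<and> (F1 e = 1 \<or> F1 e = -1 \<or> F2 e = 1 \<or> F2 e = -1)" if "e \<in> E" for e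
  proof -
    have "e \<in> C1 \<or> e \<in> C2" using cov that by auto
    then have h3: "\<not> (\<phi>1 e = 0 \<and> \<phi>2 e = 0)" using p1(1) p2(1) by force
    have h1: "\<phi>1 e = 1 \<or> \<phi>1 e = -1 \<or> \<phi>1 e = 0" using p1(1) by blast
    have h2: "\<phi>2 e = 1 \<or> \<phi>2 e = -1 \<or> \<phi>2 e = 0" using p2(1) by blast
    show ?thesis using h1 h2 h3 unfolding F1_def F2_def by (elim disjE) simp_all
  qed
  have nz1: "\<forall>e\<in>E. F1 e \<noteq> 0" and nz2: "\<forall>e\<in>E. F2 e \<noteq> 0" using props by auto
  define os where "os = (\<lambda>i::nat. if i = 0 then (\<lambda>x. F1 x > 0) else (\<lambda>x. F2 x > 0))"
  have "\<forall>e\<in>E. \<exists>i<2. deletable V E ends (os i) e"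
  proof
    fix e assume eE: "e \<in> E"
    show "\<exists>i<2. deletable V E ends (os i) e"
    proof (cases "F1 e = 1 \<or> F1 e = -1")
      case True
      have "deletable V E ends (\<lambda>x. F1 x > 0) e"
        by (rule del_lemma[OF kc c1[unfolded circ_def] nz1 eE True])
      then show ?thesis by (intro exI[of _ 0]) (simp add: os_def)
    next
      case False
      then have "F2 e = 1 \<or> F2 e = -1" using props eE by blast
      then have "deletable V E ends (\<lambda>x. F2 x > 0) e"
        by (rule del_lemma[OF kc c2[unfolded circ_def] nz2 eE])
      then show ?thesis by (intro exI[of _ 1]) (simp add: os_def)
    qed
  qed
  then show ?thesis by blast
qed

lemma cover_lemma:
  assumes kc: "k_edge_connected 3 V E ends"
    and C1: "C1 \<subseteq> E" "\<forall>v. even (\<Sum>e\<in>C1. dd (ends e) v)"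
    and C2: "C2 \<subseteq> E" "\<forall>v. even (\<Sum>e\<in>C2. dd (ends e) v)"
    and cov: "C1 \<union> C2 = E"
  shows "frank_number V E ends \<le> 2"
  unfolding frank_number_def by (rule Least_le) (rule cover_lemma'[OF assms])



lemma flow_circ:
  assumes mg: "multigraph V E ends" and nz: "nowhere_zero_flow 4 V E ends"
  shows "\<exists>g. circ E ends g \<and> (\<forall>e\<in>E. g e \<noteq> 0 \<and> \<bar>g e\<bar> \<le> 3)"
proof -
  obtain ori and f :: "_ \<Rightarrow> int" where fb: "\<forall>e\<in>E. f e \<noteq> 0 \<and> \<bar>f e\<bar> \<le> int 4 - 1"
    and cons: "\<forall>v\<in>V. (\<Sum>e\<in>{e\<in>E. head ends ori e = v}. f e) = (\<Sum>e\<in>{e\<in>E. tail ends ori e = v}. f e)"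
    using nz unfolding nowhere_zero_flow_def by blast
  have finE: "finite E" and inV: "\<And>e. e \<in> E \<Longrightarrow> fst (ends e) \<in> V \<and> snd (ends e) \<in> V"
    using mg by (auto simp: multigraph_def)
  define g where "g = (\<lambda>e. if ori e then f e else - f e)"
  have "(\<Sum>e\<in>E. g e * dd (ends e) v) = 0" for v
  proof (cases "v \<in> V")
    case False
    have "\<And>e. e \<in> E \<Longrightarrow> dd (ends e) v = 0" using inV False by (force simp: dd_def)
    then show ?thesis by simp
  next
    case True
    have "(\<Sum>e\<in>E. g e * dd (ends e) v)
        = (\<Sum>e\<in>E. (if head ends ori e = v then f e else 0) - (if tail ends ori e = v then f e else 0))"
      by (rule sum.cong) (auto simp: g_def dd_def head_def tail_def)
    also have "\<dots> = (\<Sum>e\<in>{e\<in>E. head ends ori e = v}. f e) - (\<Sum>e\<in>{e\<in>E. tail ends ori e = v}. f e)"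
      by (simp add: sum_subtractf sum.inter_filter[OF finE])
    finally show ?thesis using cons True by simp
  qed
  then have "circ E ends g" by (simp add: circ_def)
  moreover have "\<forall>e\<in>E. g e \<noteq> 0 \<and> \<bar>g e\<bar> \<le> 3" using fb by (auto simp: g_def)
  ultimately show ?thesis by blast
qed

lemma flow_cover:
  assumes kc: "k_edge_connected 3 V E ends" and nz: "nowhere_zero_flow 4 V E ends"
  shows "frank_number V E ends \<le> 2"
proof -
  have mg: "multigraph V E ends" using kc by (simp add: k_edge_connected_def)
  have finE: "finite E" using mg by (simp add: multigraph_def)
  obtain g where gc: "circ E ends g" and gb: "\<forall>e\<in>E. g e \<noteq> 0 \<and> \<bar>g e\<bar> \<le> 3"
    using flow_circ[OF mg nz] by blast
  define C1 where "C1 = {e\<in>E. odd (g e)}"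
  have C1E: "C1 \<subseteq> E" by (auto simp: C1_def)
  have ev1: "\<forall>v. even (\<Sum>e\<in>C1. dd (ends e) v)" using parity[OF finE gc] by (simp add: C1_def)
  obtain \<phi> where ph: "\<forall>e. (e \<in> C1 \<longrightarrow> \<phi> e = 1 \<or> \<phi> e = -1) \<and> (e \<notin> C1 \<longrightarrow> \<phi> e = 0)" "circ E ends \<phi>"
    using eul_ext[OF finE C1E ev1] by (elim exE conjE)
  define \<psi> where "\<psi> = (\<lambda>e. (g e - \<phi> e) div 2)"
  have two: "g e - \<phi> e = 2 * \<psi> e" if "e \<in> E" for e
  proof -
    have "even (g e - \<phi> e)"
    proof (cases "e \<in> C1")
      case True then show ?thesis using ph(1) by (auto simp: C1_def)
    next
      case False then show ?thesis using ph(1) that by (auto simp: C1_def)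
    qed
    then show ?thesis by (simp add: \<psi>_def)
  qed
  have cd: "circ E ends (\<lambda>e. 1 * g e + (-1) * \<phi> e)" by (rule circ_lin[OF gc ph(2)])
  have "circ E ends \<psi>"
    unfolding circ_def
  proof
    fix v
    have "2 * (\<Sum>e\<in>E. \<psi> e * dd (ends e) v) = (\<Sum>e\<in>E. (1 * g e + (-1) * \<phi> e) * dd (ends e) v)"
      unfolding sum_distrib_left by (rule sum.cong) (use two in auto)
    then show "(\<Sum>e\<in>E. \<psi> e * dd (ends e) v) = 0" using cd by (simp add: circ_def)
  qed
  define C2 where "C2 = {e\<in>E. odd (\<psi> e)}"
  have C2E: "C2 \<subseteq> E" by (auto simp: C2_def)
  have ev2: "\<forall>v. even (\<Sum>e\<in>C2. dd (ends e) v)" using parity[OF finE \<open>circ E ends \<psi>\<close>] by (simp add: C2_def)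
  have "C1 \<union> C2 = E"
  proof
    show "C1 \<union> C2 \<subseteq> E" using C1E C2E by auto
  next
    show "E \<subseteq> C1 \<union> C2"
    proof
      fix e assume eE: "e \<in> E"
      show "e \<in> C1 \<union> C2"
      proof (cases "e \<in> C1")
        case False
        then have ev: "even (g e)" and p0: "\<phi> e = 0" using eE ph(1) by (auto simp: C1_def)
        have b: "g e \<noteq> 0" "g e \<le> 3" "- g e \<le> 3" using gb eE by (auto simp: abs_le_iff)
        have "g e = 2 \<or> g e = -2" using b ev by presburger
        then have "\<psi> e = 1 \<or> \<psi> e = -1" using p0 by (auto simp: \<psi>_def)
        then show ?thesis using eE by (auto simp: C2_def)
      qed simp
    qed
  qed
  then show ?thesis using cover_lemma[OF kc C1E ev1 C2E ev2] by simp
qed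



lemma two_vertices:
  assumes "finite V" "2 \<le> card V" "v \<in> V"
  shows "\<exists>w\<in>V. w \<noteq> v"
proof (rule ccontr)
  assume "\<not> ?thesis"
  then have "V \<subseteq> {v}" by auto
  then have "card V \<le> card {v}" by (rule card_mono[rotated]) simp
  then show False using assms by simp
qed

lemma deg3:
  assumes kc: "k_edge_connected 3 V E ends" and vV: "v \<in> V"
  shows "3 \<le> card {e\<in>E. fst (ends e) = v \<or> snd (ends e) = v}"
proof (rule ccontr)
  define I where "I = {e\<in>E. fst (ends e) = v \<or> snd (ends e) = v}"
  assume "\<not> 3 \<le> card {e\<in>E. fst (ends e) = v \<or> snd (ends e) = v}"
  then have cI: "card I < 3" by (simp add: I_def)
  have mg: "multigraph V E ends" and c2: "2 \<le> card V"
    and fin3: "\<forall>K \<subseteq> E. card K < 3 \<longrightarrow> connected_graph V ends (E - K)"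
    using kc by (auto simp: k_edge_connected_def)
  have finV: "finite V" using mg by (simp add: multigraph_def)
  obtain w where wV: "w \<in> V" and wv: "w \<noteq> v" using two_vertices[OF finV c2 vV] by blast
  have "I \<subseteq> E" by (auto simp: I_def)
  then have "connected_graph V ends (E - I)" using fin3 cI by blast
  then have "(v, w) \<in> (uedges ends (E - I))\<^sup>*" using vV wV by (simp add: connected_graph_def)
  then obtain y where "(v, y) \<in> uedges ends (E - I)" using wv by (auto elim: converse_rtranclE)
  then obtain e where "e \<in> E - I" "(v, y) = ends e \<or> (v, y) = prod.swap (ends e)"
    by (auto simp: uedges_def)
  then show False by (cases "ends e") (auto simp: I_def)
qed

lemma odd_sum_parity:
  "finite S \<Longrightarrow> (\<forall>x\<in>S. odd (h x :: int)) \<Longrightarrow> (even (sum h S) \<longleftrightarrow> even (card S))"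
  by (induction S rule: finite_induct) auto

lemma colour_facts:
  assumes kc: "k_edge_connected 3 V E ends" and vV: "v \<in> V"
    and cb: "\<forall>e\<in>E. c e < (3::nat)"
    and pr: "\<forall>e1\<in>E. \<forall>e2\<in>E. e1 \<noteq> e2 \<and>
        {fst (ends e1), snd (ends e1)} \<inter> {fst (ends e2), snd (ends e2)} \<noteq> {} \<longrightarrow> c e1 \<noteq> c e2"
  defines "I \<equiv> {e\<in>E. fst (ends e) = v \<or> snd (ends e) = v}"
  shows "inj_on c I" "c ` I = {..<3}" "card I = 3" "finite I"
proof -
  have finE: "finite E" using kc by (auto simp: k_edge_connected_def multigraph_def)
  show fI: "finite I" using finE by (simp add: I_def)
  show inj: "inj_on c I"
  proof (rule inj_onI)
    fix x y assume "x \<in> I" "y \<in> I" "c x = c y"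
    then show "x = y" using pr unfolding I_def by blast
  qed
  have sub: "c ` I \<subseteq> {..<3}" using cb by (auto simp: I_def)
  have "card (c ` I) = card I" using inj by (rule card_image)
  moreover have "card I \<ge> 3" using deg3[OF kc vV] by (simp add: I_def)
  moreover have "card (c ` I) \<le> 3" using card_mono[OF _ sub] by simp
  ultimately show "card I = 3" by simp
  then show "c ` I = {..<3}" using card_subset_eq[OF _ sub] \<open>card (c ` I) = card I\<close> by simp
qed

lemma colour_even:
  assumes kc: "k_edge_connected 3 V E ends" and k: "k < 3"
    and cb: "\<forall>e\<in>E. c e < (3::nat)"
    and pr: "\<forall>e1\<in>E. \<forall>e2\<in>E. e1 \<noteq> e2 \<and>
        {fst (ends e1), snd (ends e1)} \<inter> {fst (ends e2), snd (ends e2)} \<noteq> {} \<longrightarrow> c e1 \<noteq> c e2"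
  shows "\<forall>v. even (\<Sum>e\<in>{e\<in>E. c e \<noteq> k}. dd (ends e) v)"
proof
  fix v
  have mg: "multigraph V E ends" using kc by (simp add: k_edge_connected_def)
  have finE: "finite E" and inV: "\<And>e. e \<in> E \<Longrightarrow> fst (ends e) \<in> V \<and> snd (ends e) \<in> V \<and> fst (ends e) \<noteq> snd (ends e)"
    using mg by (auto simp: multigraph_def)
  define C where "C = {e\<in>E. c e \<noteq> k}"
  define I where "I = {e\<in>E. fst (ends e) = v \<or> snd (ends e) = v}"
  show "even (\<Sum>e\<in>{e\<in>E. c e \<noteq> k}. dd (ends e) v)"
  proof (cases "v \<in> V")
    case False
    have "\<And>e. e \<in> E \<Longrightarrow> dd (ends e) v = 0" using inV False by (force simp: dd_def)
    then show ?thesis by simp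
  next
    case True
    note cf = colour_facts[OF kc True cb pr, folded I_def]
    have CI: "C \<inter> I \<subseteq> C" by auto
    have finC: "finite C" using finE by (simp add: C_def)
    have "(\<Sum>e\<in>C. dd (ends e) v) = (\<Sum>e\<in>C \<inter> I. dd (ends e) v)"
      by (rule sum.mono_neutral_right[OF finC CI]) (auto simp: C_def I_def dd_def)
    moreover have "\<forall>e\<in>C \<inter> I. odd (dd (ends e) v)"
    proof
      fix e assume "e \<in> C \<inter> I"
      then have "e \<in> E" "fst (ends e) = v \<or> snd (ends e) = v" by (auto simp: C_def I_def)
      then show "odd (dd (ends e) v)" using inV[of e] by (auto simp: dd_def)
    qed
    moreover have "card (C \<inter> I) = 2"
    proof -
      have "C \<inter> I = {e\<in>I. c e \<noteq> k}" by (auto simp: C_def I_def)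
      then have "c ` (C \<inter> I) = c ` I - {k}" by auto
      then have "c ` (C \<inter> I) = {..<3} - {k}" using cf(2) by simp
      moreover have "card (c ` (C \<inter> I)) = card (C \<inter> I)"
        by (rule card_image) (rule inj_on_subset[OF cf(1)], auto)
      moreover have "card ({..<3::nat} - {k}) = 2" using k by simp
      ultimately show ?thesis by simp
    qed
    moreover have "finite (C \<inter> I)" using finC by simp
    ultimately show ?thesis using odd_sum_parity[of "C \<inter> I" "\<lambda>e. dd (ends e) v"] by (simp add: C_def)
  qed
qed



lemma no_out:
  assumes e0: "e0 \<in> E" and vV: "v \<in> V" and wV: "w \<in> V" and vw: "v \<noteq> w"
    and no: "\<forall>e\<in>E-{e0}. tail ends ori e \<noteq> v"
  shows "\<not> deletable V E ends ori e0"
proof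
  assume "deletable V E ends ori e0"
  then have "strong V ends (E - {e0}) ori" by (simp add: deletable_def)
  then have "(v, w) \<in> (arcs ends ori (E - {e0}))\<^sup>+" using vV wV vw unfolding strong_def by simp
  note tr = tranclD[OF this]
  then obtain y where "(v, y) \<in> arcs ends ori (E - {e0})" by (elim exE conjE)
  then obtain e where "e \<in> E - {e0}" "(tail ends ori e, head ends ori e) = (v, y)"
    unfolding arcs_def by blast
  then show False using no by auto
qed

lemma no_in:
  assumes e0: "e0 \<in> E" and vV: "v \<in> V" and wV: "w \<in> V" and vw: "v \<noteq> w"
    and no: "\<forall>e\<in>E-{e0}. head ends ori e \<noteq> v"
  shows "\<not> deletable V E ends ori e0"
proof
  assume "deletable V E ends ori e0"
  then have "strong V ends (E - {e0}) ori" by (simp add: deletable_def)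
  then have "(w, v) \<in> (arcs ends ori (E - {e0}))\<^sup>+" using vV wV vw unfolding strong_def by simp
  note tr = tranclD2[OF this]
  then obtain y where "(y, v) \<in> arcs ends ori (E - {e0})" by (elim exE conjE)
  then obtain e where "e \<in> E - {e0}" "(tail ends ori e, head ends ori e) = (y, v)"
    unfolding arcs_def by blast
  then show False using no by auto
qed

lemma card_le1_sub:
  assumes "finite S" "card S \<le> 1" "x \<in> T" "S \<subseteq> T"
  shows "\<exists>e0\<in>T. S \<subseteq> {e0}"
proof (cases "S = {}")
  case True then show ?thesis using assms by auto
next
  case False
  then obtain a where a: "a \<in> S" by auto
  have "S \<subseteq> {a}"
  proof
    fix b assume "b \<in> S"
    then show "b \<in> {a}" using a assms(2) card_le_Suc0_iff_eq[OF assms(1)] by auto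
  qed
  then show ?thesis using a assms(4) by auto
qed

lemma lower:
  assumes kc: "k_edge_connected 3 V E ends" and col: "three_edge_colourable V E ends" and that: "k < 2"
  shows "\<not> (\<exists>os :: nat \<Rightarrow> ('e \<Rightarrow> bool). \<forall>e\<in>E. \<exists>i<k. deletable V E ends (os i) e)"
proof
  assume "\<exists>os :: nat \<Rightarrow> ('e \<Rightarrow> bool). \<forall>e\<in>E. \<exists>i<k. deletable V E ends (os i) e"
  then obtain os :: "nat \<Rightarrow> ('e \<Rightarrow> bool)" where os: "\<forall>e\<in>E. \<exists>i<k. deletable V E ends (os i) e" by blast
  obtain c where cb: "\<forall>e\<in>E. c e < (3::nat)"
    and pr: "\<forall>e1\<in>E. \<forall>e2\<in>E. e1 \<noteq> e2 \<and>
        {fst (ends e1), snd (ends e1)} \<inter> {fst (ends e2), snd (ends e2)} \<noteq> {} \<longrightarrow> c e1 \<noteq> c e2"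
    using col by (auto simp: three_edge_colourable_def)
  have mg: "multigraph V E ends" and c2: "2 \<le> card V" using kc by (auto simp: k_edge_connected_def)
  have finV: "finite V" and finE: "finite E"
    and inV: "\<And>e. e \<in> E \<Longrightarrow> fst (ends e) \<in> V \<and> snd (ends e) \<in> V \<and> fst (ends e) \<noteq> snd (ends e)"
    using mg by (auto simp: multigraph_def)
  have "V \<noteq> {}" using c2 by auto
  then obtain v where vV: "v \<in> V" by auto
  obtain w where wV: "w \<in> V" and wv: "w \<noteq> v" using two_vertices[OF finV c2 vV] by blast
  define I where "I = {e\<in>E. fst (ends e) = v \<or> snd (ends e) = v}"
  note cf = colour_facts[OF kc vV cb pr, folded I_def]
  have "I \<noteq> {}" using cf(3) by auto
  then obtain x where xI: "x \<in> I" by auto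
  have IE: "I \<subseteq> E" by (auto simp: I_def)
  have xE: "x \<in> E" using xI IE by auto
  then obtain i where "i < k" using os by blast
  then have k1: "k = 1" using that by simp
  define ori where "ori = os 0"
  have alld: "\<forall>e\<in>E. deletable V E ends ori e" using os k1 by (auto simp: ori_def)
  define Out where "Out = {e\<in>I. tail ends ori e = v}"
  define In where "In = {e\<in>I. head ends ori e = v}"
  have "Out \<union> In = I"
    by (auto simp: Out_def In_def I_def tail_def head_def dest: inV)
  moreover have dj: "Out \<inter> In = {}"
    by (auto simp: Out_def In_def I_def tail_def head_def dest: inV)
  moreover have fO: "finite Out" "finite In" using cf(4) by (auto simp: Out_def In_def)
  ultimately have "card Out + card In = 3" using cf(3) card_Un_disjoint[OF fO dj] by simp
  then have "card Out \<le> 1 \<or> card In \<le> 1" by linarith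
  then show False
  proof
    assume "card Out \<le> 1"
    then obtain e0 where e0: "e0 \<in> I" "Out \<subseteq> {e0}" using card_le1_sub[OF fO(1) _ xI] by (auto simp: Out_def)
    have "\<forall>e\<in>E-{e0}. tail ends ori e \<noteq> v"
    proof (intro ballI notI)
      fix e assume "e \<in> E - {e0}" "tail ends ori e = v"
      then have "e \<in> Out" by (auto simp: Out_def I_def tail_def split: if_splits)
      then show False using e0 \<open>e \<in> E - {e0}\<close> by auto
    qed
    moreover have "e0 \<in> E" using e0 IE by blast
    ultimately show False using no_out[OF \<open>e0 \<in> E\<close> vV wV wv[symmetric]] alld by blast
  next
    assume "card In \<le> 1"
    then obtain e0 where e0: "e0 \<in> I" "In \<subseteq> {e0}" using card_le1_sub[OF fO(2) _ xI] by (auto simp: In_def)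
    have "\<forall>e\<in>E-{e0}. head ends ori e \<noteq> v"
    proof (intro ballI notI)
      fix e assume "e \<in> E - {e0}" "head ends ori e = v"
      then have "e \<in> In" by (auto simp: In_def I_def head_def split: if_splits)
      then show False using e0 \<open>e \<in> E - {e0}\<close> by auto
    qed
    moreover have "e0 \<in> E" using e0 IE by blast
    ultimately show False using no_in[OF \<open>e0 \<in> E\<close> vV wV wv[symmetric]] alld by blast
  qed
qed

theorem theorem2:
  fixes V :: "'v set" and E :: "'e set" and ends :: "'e \<Rightarrow> 'v \<times> 'v"
  assumes "k_edge_connected 3 V E ends"
  shows "(nowhere_zero_flow 4 V E ends \<longrightarrow> frank_number V E ends \<le> 2) \<and>
         (three_edge_colourable V E ends \<longrightarrow> frank_number V E ends = 2)"
proof (intro conjI impI)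
  assume "nowhere_zero_flow 4 V E ends"
  then show "frank_number V E ends \<le> 2" by (rule flow_cover[OF assms])
next
  assume col: "three_edge_colourable V E ends"
  obtain c where cb: "\<forall>e\<in>E. c e < (3::nat)"
    and pr: "\<forall>e1\<in>E. \<forall>e2\<in>E. e1 \<noteq> e2 \<and>
        {fst (ends e1), snd (ends e1)} \<inter> {fst (ends e2), snd (ends e2)} \<noteq> {} \<longrightarrow> c e1 \<noteq> c e2"
    using col by (auto simp: three_edge_colourable_def)
  have ev1: "\<forall>v. even (\<Sum>e\<in>{e\<in>E. c e \<noteq> 2}. dd (ends e) v)" by (rule colour_even[OF assms _ cb pr]) simp
  have ev2: "\<forall>v. even (\<Sum>e\<in>{e\<in>E. c e \<noteq> 1}. dd (ends e) v)" by (rule colour_even[OF assms _ cb pr]) simp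
  have cov: "{e\<in>E. c e \<noteq> 2} \<union> {e\<in>E. c e \<noteq> 1} = E" by auto
  have le: "frank_number V E ends \<le> 2"
    by (rule cover_lemma[OF assms _ ev1 _ ev2 cov]) auto
  have ex: "\<exists>os :: nat \<Rightarrow> ('e \<Rightarrow> bool). \<forall>e\<in>E. \<exists>i<(2::nat). deletable V E ends (os i) e"
    by (rule cover_lemma'[OF assms _ ev1 _ ev2 cov]) auto
  have "\<exists>os :: nat \<Rightarrow> ('e \<Rightarrow> bool). \<forall>e\<in>E. \<exists>i<frank_number V E ends. deletable V E ends (os i) e"
    unfolding frank_number_def by (rule LeastI_ex) (rule exI, rule ex)
  then have "\<not> frank_number V E ends < 2" using lower[OF assms col] by blast
  then show "frank_number V E ends = 2" using le by simp
qed


end
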